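(* Let $n>d+1$ and let $\mathcal{F}_1,\dots,\mathcal{F}_n$ be collections of axis-parallel boxes in $\mathbb{R}^d$ such that for all $i\neq j$, $B\in\mathcal{F}_i$ and $B'\in\mathcal{F}_j$ we have $B\cap B'\neq\emptyset$. Then there exist $i\in[n]$ and, for each $j\in[n]\setminus\{i\}$, a box $B_j\in\mathcal{F}_j$ such that $\mathcal{F}_i\cup\{B_j: j\in[n],\,j\neq i\}$ is $2$-pierceable.
   Context: An axis-parallel box in $\mathbb{R}^d$ is a set $[\alpha_1,\beta_1]\times\dots\times[\alpha_d,\beta_d]$ with real $\alpha_j\le\beta_j$. A family is $2$-pierceable if some set of at most $2$ points of $\mathbb{R}^d$ meets every member of it. *)

theory Defs
  imports "HOL-Analysis.Analysis"
begin

definition is_box :: "(real^'d) set \<Rightarrow> bool" where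
  "is_box B \<longleftrightarrow> (\<exists>a b :: real^'d. (\<forall>k. a$k \<le> b$k) \<and>
      B = {x. \<forall>k. a$k \<le> x$k \<and> x$k \<le> b$k})"

definition pierceable :: "nat \<Rightarrow> 'a set set \<Rightarrow> bool" where
  "pierceable t G \<longleftrightarrow> (\<exists>P. finite P \<and> card P \<le> t \<and> (\<forall>B\<in>G. B \<inter> P \<noteq> {}))"

end

theory Submission
  imports Defs
begin

lemma box_nonempty: "is_box (B :: (real^'d) set) \<Longrightarrow> B \<noteq> {}"
proof -
  assume "is_box B"
  then obtain a b where "\<forall>k. a$k \<le> (b::real^'d)$k" "B = {x. \<forall>k. a$k \<le> x$k \<and> x$k \<le> b$k}"
    unfolding is_box_def by blast
  then have "a \<in> B" by auto
  then show ?thesis by blast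
qed

lemma helly_box:
  fixes H :: "(real^'d) set set"
  assumes ne: "H \<noteq> {}" and bx: "\<forall>B\<in>H. is_box B"
    and pw: "\<forall>B\<in>H. \<forall>B'\<in>H. B \<inter> B' \<noteq> {}"
  shows "\<exists>p. \<forall>B\<in>H. p \<in> B"
proof -
  have "\<forall>B\<in>H. \<exists>a b. (\<forall>k. (a::real^'d)$k \<le> b$k) \<and> B = {x. \<forall>k. a$k \<le> x$k \<and> x$k \<le> b$k}"
    using bx unfolding is_box_def .
  then obtain a where "\<forall>B\<in>H. \<exists>b. (\<forall>k. a B$k \<le> b$k) \<and> B = {x. \<forall>k. a B$k \<le> x$k \<and> x$k \<le> b$k}"
    by (rule bchoice[THEN exE])
  then obtain b where ab0: "\<forall>B\<in>H. (\<forall>k. a B$k \<le> b B$k) \<and> B = {x. \<forall>k. a B$k \<le> x$k \<and> x$k \<le> b B$k}"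
    by (rule bchoice[THEN exE])
  then have ab: "\<And>B. B\<in>H \<Longrightarrow> (\<forall>k. a B$k \<le> b B$k) \<and>
      B = {x. \<forall>k. a B$k \<le> x$k \<and> x$k \<le> b B$k}"
    by simp
  have mem: "x \<in> B \<longleftrightarrow> (\<forall>k. a B$k \<le> x$k \<and> x$k \<le> b B$k)" if "B \<in> H" for B x
  proof -
    have e: "B = {x. \<forall>k. a B$k \<le> x$k \<and> x$k \<le> b B$k}" using ab[OF that] by (rule conjunct2)
    have "x \<in> B \<longleftrightarrow> x \<in> {x. \<forall>k. a B$k \<le> x$k \<and> x$k \<le> b B$k}"
      using arg_cong[OF e, of "\<lambda>S. x \<in> S"] by this
    also have "\<dots> \<longleftrightarrow> (\<forall>k. a B$k \<le> x$k \<and> x$k \<le> b B$k)" by (rule mem_Collect_eq)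
    finally show ?thesis .
  qed
  have cross: "a B $ k \<le> b B' $ k" if "B \<in> H" "B' \<in> H" for B B' k
  proof -
    have "B \<inter> B' \<noteq> {}" using pw that by simp
    then obtain x where "x \<in> B \<inter> B'" by (meson ex_in_conv)
    then have x: "x \<in> B" "x \<in> B'" by (rule IntD1, rule IntD2)
    have 1: "a B $ k \<le> x $ k" using mem[OF that(1), THEN iffD1, OF x(1)] by simp
    have 2: "x $ k \<le> b B' $ k" using mem[OF that(2), THEN iffD1, OF x(2)] by simp
    show ?thesis using 1 2 by (rule order_trans)
  qed
  define p where "p = (\<chi> k. Sup ((\<lambda>B. a B $ k) ` H))"
  have "p \<in> B" if B: "B \<in> H" for B
  proof -
    have "a B $ k \<le> p $ k \<and> p $ k \<le> b B $ k" for k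
    proof
      have bdd: "bdd_above ((\<lambda>B. a B $ k) ` H)"
        unfolding bdd_above_def using cross[OF _ B] by blast
      show "a B $ k \<le> p $ k" unfolding p_def using cSup_upper[OF _ bdd] B by simp
      have "Sup ((\<lambda>B. a B $ k) ` H) \<le> b B $ k"
        by (rule cSup_least) (use ne cross[OF _ B] in auto)
      then show "p $ k \<le> b B $ k" unfolding p_def by simp
    qed
    then show ?thesis using mem[OF B] by blast
  qed
  then show ?thesis by blast
qed

lemma disjoint_boxes:
  fixes B B' :: "(real^'d) set"
  assumes "is_box B" "is_box B'" "B \<inter> B' = {}"
  shows "\<exists>k s t. t < s \<and> (((\<forall>x\<in>B. s \<le> x$k) \<and> (\<forall>x\<in>B'. x$k \<le> t)) \<or>
                          ((\<forall>x\<in>B'. s \<le> x$k) \<and> (\<forall>x\<in>B. x$k \<le> t)))"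
proof (rule ccontr)
  assume nc: "\<not> ?thesis"
  obtain a b where ab: "\<forall>k. a$k \<le> b$k" "B = {x. \<forall>k. a$k \<le> x$k \<and> x$k \<le> b$k}"
    using assms(1) unfolding is_box_def by blast
  obtain a' b' where ab': "\<forall>k. a'$k \<le> b'$k" "B' = {x. \<forall>k. a'$k \<le> x$k \<and> x$k \<le> b'$k}"
    using assms(2) unfolding is_box_def by blast
  have c: "a$k \<le> b'$k \<and> a'$k \<le> b$k" for k
  proof (rule ccontr)
    assume "\<not> (a$k \<le> b'$k \<and> a'$k \<le> b$k)"
    then consider "b'$k < a$k" | "b$k < a'$k" by linarith
    then show False
    proof cases
      case 1
      have u: "\<forall>x\<in>B. a$k \<le> x$k" using ab(2) by simp
      have v: "\<forall>x\<in>B'. x$k \<le> b'$k" using ab'(2) by simp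
      show False using nc 1 u v by blast
    next
      case 2
      have u: "\<forall>x\<in>B'. a'$k \<le> x$k" using ab'(2) by simp
      have v: "\<forall>x\<in>B. x$k \<le> b$k" using ab(2) by simp
      show False using nc 2 u v by blast
    qed
  qed
  define x where "x = (\<chi> k. max (a$k) (a'$k))"
  have "x \<in> B" "x \<in> B'" using ab ab' c unfolding x_def by auto
  then show False using assms(3) by blast
qed

definition badk :: "(real^'d) set set \<Rightarrow> 'd \<Rightarrow> bool" where
  "badk G k \<longleftrightarrow> (\<exists>U\<in>G. \<exists>V\<in>G. \<exists>s t. t < s \<and> (\<forall>x\<in>U. s \<le> x$k) \<and> (\<forall>x\<in>V. x$k \<le> t))"

theorem lemma1:
  fixes F :: "nat \<Rightarrow> (real^'d) set set" and n :: nat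
  assumes "n > CARD('d) + 1"
    and "\<And>i. i \<in> {1..n} \<Longrightarrow> F i \<noteq> {}"
    and "\<And>i. i \<in> {1..n} \<Longrightarrow> \<forall>B\<in>F i. is_box B"
    and "\<And>i j B B'. i \<in> {1..n} \<Longrightarrow> j \<in> {1..n} \<Longrightarrow> i \<noteq> j \<Longrightarrow>
           B \<in> F i \<Longrightarrow> B' \<in> F j \<Longrightarrow> B \<inter> B' \<noteq> {}"
  shows "\<exists>i\<in>{1..n}. \<exists>Bs :: nat \<Rightarrow> (real^'d) set.
           (\<forall>j\<in>{1..n} - {i}. Bs j \<in> F j) \<and>
           pierceable 2 (F i \<union> Bs ` ({1..n} - {i}))"
proof -
  define Bad where "Bad = {j\<in>{1..n}. \<not> (\<forall>B\<in>F j. \<forall>B'\<in>F j. B \<inter> B' \<noteq> {})}"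
  have bad_ex: "\<exists>k. badk (F j) k" if "j \<in> Bad" for j
  proof -
    have jn: "j \<in> {1..n}" and nn: "\<not> (\<forall>B\<in>F j. \<forall>B'\<in>F j. B \<inter> B' \<noteq> {})"
      using that unfolding Bad_def by simp_all
    from nn obtain B B' where BB: "B \<in> F j" "B' \<in> F j" "B \<inter> B' = {}" "j \<in> {1..n}"
      using jn by meson
    then have "is_box B" "is_box B'" using assms(3) by auto
    from disjoint_boxes[OF this BB(3)] obtain k s t where
      "t < s \<and> (((\<forall>x\<in>B. s \<le> x$k) \<and> (\<forall>x\<in>B'. x$k \<le> t)) \<or>
                          ((\<forall>x\<in>B'. s \<le> x$k) \<and> (\<forall>x\<in>B. x$k \<le> t)))" by blast
    then have "badk (F j) k" unfolding badk_def using BB by blast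
    then show ?thesis by blast
  qed
  have uniq: "j = j'" if jj: "j \<in> {1..n}" "j' \<in> {1..n}" "badk (F j) k" "badk (F j') k" for j j' k
  proof (rule ccontr)
    assume ne: "j \<noteq> j'"
    obtain U1 V1 s1 t1 where 1: "U1 \<in> F j" "V1 \<in> F j" "t1 < s1" "\<forall>x\<in>U1. s1 \<le> x$k" "\<forall>x\<in>V1. x$k \<le> t1"
      using jj(3) unfolding badk_def by blast
    obtain U2 V2 s2 t2 where 2: "U2 \<in> F j'" "V2 \<in> F j'" "t2 < s2" "\<forall>x\<in>U2. s2 \<le> x$k" "\<forall>x\<in>V2. x$k \<le> t2"
      using jj(4) unfolding badk_def by blast
    obtain x where "x \<in> U1 \<inter> V2" using assms(4)[OF jj(1,2) ne 1(1) 2(2)] by (meson ex_in_conv)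
    then have x: "x \<in> U1" "x \<in> V2" by (rule IntD1, rule IntD2)
    obtain y where "y \<in> U2 \<inter> V1" using assms(4)[OF jj(2,1) ne[symmetric] 2(1) 1(2)] by (meson ex_in_conv)
    then have y: "y \<in> U2" "y \<in> V1" by (rule IntD1, rule IntD2)
    have "s1 \<le> x$k" using 1(4) x(1) by simp
    moreover have "x$k \<le> t2" using 2(5) x(2) by simp
    moreover have "s2 \<le> y$k" using 2(4) y(1) by simp
    moreover have "y$k \<le> t1" using 1(5) y(2) by simp
    ultimately show False using 1 2 by linarith
  qed
  define f where "f k = (THE j. j \<in> {1..n} \<and> badk (F j) k)" for k :: 'd
  have "Bad \<subseteq> f ` UNIV"
  proof
    fix j assume j: "j \<in> Bad"
    obtain k where k: "badk (F j) k" using bad_ex[OF j] by (rule exE)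
    have jn: "j \<in> {1..n}" using j unfolding Bad_def by simp
    have "f k = j" unfolding f_def
    proof (rule the_equality)
      show "j \<in> {1..n} \<and> badk (F j) k" using jn k by (rule conjI)
      fix j' assume "j' \<in> {1..n} \<and> badk (F j') k"
      then show "j' = j" using uniq[OF _ jn _ k] by simp
    qed
    then show "j \<in> f ` UNIV" by (metis rangeI)
  qed
  then have "card Bad \<le> card (f ` UNIV)" by (intro card_mono) simp_all
  also have "\<dots> \<le> CARD('d)" by (rule card_image_le) simp
  finally have "card Bad < card {1..n}" using assms(1) by simp
  moreover have "finite Bad" unfolding Bad_def by simp
  ultimately have "\<not> {1..n} \<subseteq> Bad" using card_mono not_le by metis
  then obtain i where i: "i \<in> {1..n}" "i \<notin> Bad" by (meson subsetI)
  define Bs where "Bs j = (SOME B. B \<in> F j)" for j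
  have Bs: "\<forall>j\<in>{1..n} - {i}. Bs j \<in> F j"
  proof
    fix j assume "j \<in> {1..n} - {i}"
    then have "F j \<noteq> {}" using assms(2) by simp
    then show "Bs j \<in> F j" unfolding Bs_def by (simp add: some_in_eq)
  qed
  have pwi: "\<forall>B\<in>F i. \<forall>B'\<in>F i. B \<inter> B' \<noteq> {}" using i unfolding Bad_def by simp
  obtain p where p: "\<forall>B\<in>F i. p \<in> B"
    using helly_box[OF assms(2)[OF i(1)] assms(3)[OF i(1)] pwi] by (rule exE)
  have "\<exists>q. \<forall>B\<in>Bs ` ({1..n} - {i}). q \<in> B"
  proof (rule helly_box)
    have "CARD('d) \<ge> 1" using finite_UNIV_card_ge_0[where 'a='d] by simp
    then have "n \<ge> 3" using assms(1) by linarith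
    then have "(if i = 1 then 2 else 1) \<in> {1..n} - {i}" by simp
    then show "Bs ` ({1..n} - {i}) \<noteq> {}" by (metis empty_iff image_eqI)
    show "\<forall>B\<in>Bs ` ({1..n} - {i}). is_box B"
    proof
      fix B assume "B \<in> Bs ` ({1..n} - {i})"
      then obtain j where j: "j \<in> {1..n} - {i}" "B = Bs j" by (rule imageE) simp
      have "Bs j \<in> F j" using Bs j(1) by simp
      moreover have "j \<in> {1..n}" using j(1) by simp
      ultimately show "is_box B" using assms(3) j(2) by simp
    qed
    show "\<forall>B\<in>Bs ` ({1..n} - {i}). \<forall>B'\<in>Bs ` ({1..n} - {i}). B \<inter> B' \<noteq> {}"
    proof (intro ballI)
      fix B B' assume B: "B \<in> Bs ` ({1..n} - {i})" and B': "B' \<in> Bs ` ({1..n} - {i})"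
      obtain j where j: "j \<in> {1..n} - {i}" "B = Bs j" using B by (rule imageE) simp
      obtain j' where j': "j' \<in> {1..n} - {i}" "B' = Bs j'" using B' by (rule imageE) simp
      have inj: "Bs j \<in> F j" using Bs j(1) by simp
      have inj': "Bs j' \<in> F j'" using Bs j'(1) by simp
      show "B \<inter> B' \<noteq> {}"
      proof (cases "j = j'")
        case True
        have jn: "j \<in> {1..n}" using j(1) by simp
        have "is_box (Bs j)" using bspec[OF assms(3)[OF jn] inj] .
        then have "Bs j \<noteq> {}" by (rule box_nonempty)
        then show ?thesis using True j j' by simp
      next
        case False
        show ?thesis using assms(4)[OF _ _ False inj inj'] j j' by simp
      qed
    qed
  qed
  then obtain q where q: "\<forall>B\<in>Bs ` ({1..n} - {i}). q \<in> B" by (rule exE)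
  have "\<forall>B\<in>F i \<union> Bs ` ({1..n} - {i}). B \<inter> {p, q} \<noteq> {}"
  proof
    fix B assume "B \<in> F i \<union> Bs ` ({1..n} - {i})"
    then have "p \<in> B \<or> q \<in> B" using p q by (metis UnE)
    then show "B \<inter> {p, q} \<noteq> {}" by (metis IntI empty_iff insertI1 insert_commute)
  qed
  moreover have "card {p, q} \<le> 2" by (simp add: card_insert_if)
  ultimately have "pierceable 2 (F i \<union> Bs ` ({1..n} - {i}))"
    unfolding pierceable_def by (metis finite.emptyI finite.insertI)
  then show ?thesis using i(1) Bs by (metis)
qed

end
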